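(* Let $\lambda=(\lambda_1,\dots,\lambda_m)$ be a Young diagram with $n$ boxes and let $l\ge 1$ be an integer. Then $$M_{\lambda,2l}\le n(\lambda_1-1)^l\lambda_1^{\,l-1}.$$
   Context: For a Young diagram $\lambda=(\lambda_1,\dots,\lambda_m)$ with $\lambda_1\ge\dots\ge\lambda_m\ge1$, $\sum\lambda_i=n$, and an integer $l\ge 0$, define $M_{\lambda,2l}=\sum_{j=1}^m\big\{(\lambda_j-j)^l(\lambda_j-j+1)^l-j^l(j-1)^l\big\}$. *)

theory Defs
  imports Main
begin

definition young_diagram :: "nat list \<Rightarrow> bool" where
  "young_diagram lam \<longleftrightarrow> sorted_wrt (\<ge>) lam \<and> (\<forall>x\<in>set lam. x \<ge> 1)"

text \<open>M_{lambda,2l} = sum_{j=1}^m ((lambda_j - j)^l (lambda_j - j + 1)^l - j^l (j-1)^l),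
computed in the integers; lambda_j = lam ! (j - 1).\<close>
definition M :: "nat list \<Rightarrow> nat \<Rightarrow> int" where
  "M lam l = (\<Sum>j=1..length lam.
      (int (lam ! (j - 1)) - int j) ^ l * (int (lam ! (j - 1)) - int j + 1) ^ l
      - (int j) ^ l * (int j - 1) ^ l)"

end

theory Submission
  imports Defs
begin

lemma term_bound:
  fixes L a j :: int and l :: nat
  assumes "1 \<le> j" "1 \<le> L" "L \<le> a" "l \<ge> 1"
  shows "(L - j) ^ l * (L - j + 1) ^ l - j ^ l * (j - 1) ^ l \<le> L * (a - 1) ^ l * a ^ (l - 1)"
proof -
  define t where "t = (L - j) * (L - j + 1)"
  define s where "s = j * (j - 1)"
  have eq: "(L - j) ^ l * (L - j + 1) ^ l - j ^ l * (j - 1) ^ l = t ^ l - s ^ l"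
    by (simp add: t_def s_def power_mult_distrib)
  have s0: "0 \<le> s" using assms by (simp add: s_def)
  have R0: "0 \<le> L * (a - 1) ^ l * a ^ (l - 1)" using assms by simp
  have rhs: "L * (a - 1) ^ l * a ^ (l - 1) = (L * (a - 1)) * (a * (a - 1)) ^ (l - 1)"
  proof -
    have "(a - 1) ^ l = (a - 1) * (a - 1) ^ (l - 1)" using assms(4)
      by (metis Suc_diff_1 less_le_trans power_Suc zero_less_one)
    hence "L * (a - 1) ^ l * a ^ (l - 1) = (L * (a - 1)) * ((a - 1) ^ (l - 1) * a ^ (l - 1))"
      by (simp only: mult.assoc)
    thus ?thesis by (simp only: power_mult_distrib mult.commute)
  qed
  show ?thesis
  proof (cases "L \<ge> j")
    case True
    have t0: "0 \<le> t" using True by (simp add: t_def)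
    have t1: "t \<le> L * (a - 1)"
    proof -
      have "t \<le> (L - 1) * L" unfolding t_def
        using True assms by (intro mult_mono) auto
      also have "\<dots> \<le> L * (a - 1)" using assms by (simp add: algebra_simps)
      finally show ?thesis .
    qed
    have t2: "t \<le> a * (a - 1)"
    proof -
      have "t \<le> (a - 1) * a" unfolding t_def
        using True assms by (intro mult_mono) auto
      thus ?thesis by (simp add: algebra_simps)
    qed
    have "t ^ l = t * t ^ (l - 1)" using assms(4)
      by (metis Suc_diff_1 less_le_trans power_Suc zero_less_one)
    also have "\<dots> \<le> (L * (a - 1)) * (a * (a - 1)) ^ (l - 1)"
      using t0 t1 t2 by (intro mult_mono power_mono) auto
    finally have "t ^ l \<le> L * (a - 1) ^ l * a ^ (l - 1)" by (subst rhs)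
    moreover have "0 \<le> s ^ l" using s0 by simp
    ultimately show ?thesis using eq by linarith
  next
    case False
    have t0: "0 \<le> t" unfolding t_def using False
      by (simp add: mult_nonpos_nonpos)
    have "t = (j - L) * (j - L - 1)" by (simp add: t_def algebra_simps)
    also have "\<dots> \<le> j * (j - 1)" using False assms by (intro mult_mono) auto
    finally have "t \<le> s" by (simp add: s_def)
    hence "t ^ l \<le> s ^ l" using t0 by (simp add: power_mono)
    thus ?thesis using eq R0 by linarith
  qed
qed

theorem lemma5p10:
  fixes lam :: "nat list" and n l :: nat
  assumes "young_diagram lam"
    and "sum_list lam = n"
    and "lam \<noteq> []"
    and "l \<ge> 1"
  shows "M lam l \<le> int n * (int (hd lam) - 1) ^ l * int (hd lam) ^ (l - 1)"
proof -
  define a where "a = int (hd lam)"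
  have sw: "sorted_wrt (\<ge>) lam" and pos: "\<forall>x\<in>set lam. x \<ge> 1"
    using assms(1) by (auto simp: young_diagram_def)
  have le: "lam ! i \<le> hd lam" if "i < length lam" for i
  proof (cases i)
    case 0 thus ?thesis using assms(3) by (simp add: hd_conv_nth)
  next
    case (Suc k)
    thus ?thesis using sorted_wrt_nth_less[OF sw, of 0 i] that assms(3)
      by (simp add: hd_conv_nth)
  qed
  have "M lam l \<le> (\<Sum>j=1..length lam. int (lam ! (j - 1)) * (a - 1) ^ l * a ^ (l - 1))"
    unfolding M_def
  proof (rule sum_mono)
    fix j assume j: "j \<in> {1..length lam}"
    have "lam ! (j - 1) \<in> set lam" using j by auto
    hence "1 \<le> lam ! (j - 1)" using pos by auto
    moreover have "lam ! (j - 1) \<le> hd lam" using j le by auto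
    ultimately show "(int (lam ! (j - 1)) - int j) ^ l * (int (lam ! (j - 1)) - int j + 1) ^ l
      - (int j) ^ l * (int j - 1) ^ l \<le> int (lam ! (j - 1)) * (a - 1) ^ l * a ^ (l - 1)"
      using j assms(4) by (intro term_bound) (auto simp: a_def)
  qed
  also have "\<dots> = (\<Sum>j=1..length lam. int (lam ! (j - 1))) * ((a - 1) ^ l * a ^ (l - 1))"
    by (simp add: sum_distrib_right mult.assoc)
  also have "(\<Sum>j=1..length lam. int (lam ! (j - 1))) = (\<Sum>i<length lam. int (lam ! i))"
  proof -
    have "(\<Sum>j=1..length lam. int (lam ! (j - 1))) = (\<Sum>i=0..<length lam. int (lam ! i))"
      by (rule sum.reindex_bij_witness[where i="\<lambda>i. i + 1" and j="\<lambda>j. j - 1"]) auto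
    thus ?thesis by (simp add: atLeast0LessThan)
  qed
  also have "(\<Sum>i<length lam. int (lam ! i)) = int n"
    using assms(2) by (simp add: sum_list_sum_nth atLeast0LessThan flip: of_nat_sum)
  finally show ?thesis by (simp add: a_def mult.assoc)
qed

end
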